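(* Let $A=(a_{ij})_{i,j=1}^n$ be a real symmetric $n\times n$ matrix and $f(x)=x^\top A x$ for $x\in\mathbb{Z}^n$. Then $f$ is multimodular if and only if $$a_{ij}-a_{i,j+1}-a_{i+1,j}+a_{i+1,j+1}\le 0\qquad\text{for all } 0\le i<j\le n,$$ where by convention $a_{ij}=0$ whenever an index equals $0$ or $n+1$.
   Context: For $f:\mathbb{Z}^n\to\mathbb{R}\cup\{+\infty\}$, $\mathrm{dom}\, f=\{x\in\mathbb{Z}^n: f(x)<+\infty\}$. Let $e_i$ denote the $i$-th unit vector of $\mathbb{Z}^n$ and $\mathcal{F}=\{-e_1,\ e_1-e_2,\ e_2-e_3,\ \dots,\ e_{n-1}-e_n,\ e_n\}$. A function $f:\mathbb{Z}^n\to\mathbb{R}\cup\{+\infty\}$ is called multimodular if $\mathrm{dom}\, f\neq\emptyset$ and $f(z+d)+f(z+d')\ge f(z)+f(z+d+d')$ for all $z\in\mathrm{dom}\, f$ and all distinct $d,d'\in\mathcal{F}$ (with the usual conventions for $+\infty$). *)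

theory Defs
  imports "HOL-Library.Extended_Real"
begin

text \<open>Integer vectors in Z^n are represented as functions nat => int that vanish
  outside the index set {1..n}.\<close>

definition zvec :: "nat \<Rightarrow> (nat \<Rightarrow> int) set" where
  "zvec n = {x. \<forall>k. k \<notin> {1..n} \<longrightarrow> x k = 0}"

definition unitv :: "nat \<Rightarrow> nat \<Rightarrow> int" where
  "unitv i = (\<lambda>k. if k = i then 1 else 0)"

definition mmdirs :: "nat \<Rightarrow> (nat \<Rightarrow> int) set" where
  "mmdirs n = {(\<lambda>k. - unitv 1 k)} \<union> {(\<lambda>k. unitv i k - unitv (i + 1) k) | i. 1 \<le> i \<and> i < n} \<union> {unitv n}"

definition mmdom :: "nat \<Rightarrow> ((nat \<Rightarrow> int) \<Rightarrow> ereal) \<Rightarrow> (nat \<Rightarrow> int) set" where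
  "mmdom n f = {x \<in> zvec n. f x < \<infinity>}"

text \<open>Multimodularity of f : Z^n -> R \<union> {+\<infinity>} (values are assumed to avoid -\<infinity>).\<close>

definition multimodular :: "nat \<Rightarrow> ((nat \<Rightarrow> int) \<Rightarrow> ereal) \<Rightarrow> bool" where
  "multimodular n f \<longleftrightarrow>
     mmdom n f \<noteq> {} \<and>
     (\<forall>z \<in> mmdom n f. \<forall>d \<in> mmdirs n. \<forall>d' \<in> mmdirs n. d \<noteq> d' \<longrightarrow>
        f (\<lambda>k. z k + d k) + f (\<lambda>k. z k + d' k) \<ge> f z + f (\<lambda>k. z k + d k + d' k))"

definition quadform :: "nat \<Rightarrow> (nat \<Rightarrow> nat \<Rightarrow> real) \<Rightarrow> (nat \<Rightarrow> int) \<Rightarrow> real" where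
  "quadform n A x = (\<Sum>i=1..n. \<Sum>j=1..n. A i j * real_of_int (x i) * real_of_int (x j))"

definition aext :: "nat \<Rightarrow> (nat \<Rightarrow> nat \<Rightarrow> real) \<Rightarrow> nat \<Rightarrow> nat \<Rightarrow> real" where
  "aext n A i j = (if i \<in> {1..n} \<and> j \<in> {1..n} then A i j else 0)"

end

theory Submission imports Defs begin

definition BB :: "nat \<Rightarrow> (nat \<Rightarrow> nat \<Rightarrow> real) \<Rightarrow> (nat \<Rightarrow> real) \<Rightarrow> (nat \<Rightarrow> real) \<Rightarrow> real" where
  "BB n A x y = (\<Sum>i=1..n. \<Sum>j=1..n. A i j * x i * y j)"

definition ind :: "nat \<Rightarrow> nat \<Rightarrow> real" where "ind p = (\<lambda>k. if k = p then 1 else 0)"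

definition DD :: "nat \<Rightarrow> nat \<Rightarrow> real" where "DD i = (\<lambda>k. ind i k - ind (i+1) k)"

lemma BB_unit: "BB n A (ind p) (ind q) = aext n A p q"
proof -
  have 1: "(\<Sum>j=1..n. A i j * ind p i * ind q j) = (if q \<in> {1..n} then A i q * ind p i else 0)" for i
  proof -
    have "(\<Sum>j=1..n. A i j * ind p i * ind q j) = (\<Sum>j\<in>{1..n}. if j = q then A i q * ind p i else 0)"
      by (intro sum.cong refl) (simp add: ind_def)
    also have "\<dots> = (if q \<in> {1..n} then A i q * ind p i else 0)"
      by (rule sum.delta) simp
    finally show ?thesis .
  qed
  have 2: "(\<Sum>i=1..n. (if q \<in> {1..n} then A i q * ind p i else 0)) = (\<Sum>i\<in>{1..n}. if i = p then (if q \<in> {1..n} then A p q else 0) else 0)"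
    by (intro sum.cong refl) (simp add: ind_def)
  show ?thesis unfolding BB_def 1 2 sum.delta[OF finite_atLeastAtMost] aext_def by simp
qed

lemma BB_diff_left: "BB n A (\<lambda>k. x k - x' k) y = BB n A x y - BB n A x' y"
  unfolding BB_def by (simp add: algebra_simps sum_subtractf)

lemma BB_diff_right: "BB n A x (\<lambda>k. y k - y' k) = BB n A x y - BB n A x y'"
  unfolding BB_def by (simp add: algebra_simps sum_subtractf)

lemma BB_DD: "BB n A (DD i) (DD j) = aext n A i j - aext n A i (j + 1) - aext n A (i + 1) j + aext n A (i + 1) (j + 1)"
  unfolding DD_def by (simp add: BB_diff_left BB_diff_right BB_unit)

lemma BB_cong: "(\<And>k. k \<in> {1..n} \<Longrightarrow> x k = x' k) \<Longrightarrow> (\<And>k. k \<in> {1..n} \<Longrightarrow> y k = y' k) \<Longrightarrow> BB n A x y = BB n A x' y'"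
  unfolding BB_def by (intro sum.cong refl) auto

lemma BB_sym: assumes "\<forall>i \<in> {1..n}. \<forall>j \<in> {1..n}. A i j = A j i"
  shows "BB n A x y = BB n A y x"
  unfolding BB_def
  apply (subst sum.swap)
  apply (intro sum.cong refl)
  using assms by (auto simp: algebra_simps)


lemma second_diff:
  "quadform n A (\<lambda>k. z k + d k) + quadform n A (\<lambda>k. z k + d' k)
   - quadform n A z - quadform n A (\<lambda>k. z k + d k + d' k)
   = - (BB n A (\<lambda>k. real_of_int (d k)) (\<lambda>k. real_of_int (d' k)) + BB n A (\<lambda>k. real_of_int (d' k)) (\<lambda>k. real_of_int (d k)))"
proof -
  have "quadform n A (\<lambda>k. z k + d k) + quadform n A (\<lambda>k. z k + d' k)
   - quadform n A z - quadform n A (\<lambda>k. z k + d k + d' k)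
   = (\<Sum>i=1..n. \<Sum>j=1..n. A i j * real_of_int (z i + d i) * real_of_int (z j + d j)
      + A i j * real_of_int (z i + d' i) * real_of_int (z j + d' j)
      - A i j * real_of_int (z i) * real_of_int (z j)
      - A i j * real_of_int (z i + d i + d' i) * real_of_int (z j + d j + d' j))"
    unfolding quadform_def by (simp only: sum.distrib sum_subtractf)
  also have "\<dots> = (\<Sum>i=1..n. \<Sum>j=1..n. - (A i j * real_of_int (d i) * real_of_int (d' j) + A i j * real_of_int (d' i) * real_of_int (d j)))"
    by (intro sum.cong refl) (simp add: algebra_simps)
  also have "\<dots> = - (BB n A (\<lambda>k. real_of_int (d k)) (\<lambda>k. real_of_int (d' k)) + BB n A (\<lambda>k. real_of_int (d' k)) (\<lambda>k. real_of_int (d k)))"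
    unfolding BB_def by (simp only: sum.distrib sum_negf)
  finally show ?thesis .
qed


lemma dirs_zvec: "n \<ge> 1 \<Longrightarrow> d \<in> mmdirs n \<Longrightarrow> d k \<noteq> 0 \<Longrightarrow> k \<in> {1..n}"
  unfolding mmdirs_def unitv_def by (auto split: if_splits)

lemma dir_repr: "n \<ge> 1 \<Longrightarrow> d \<in> mmdirs n \<Longrightarrow> \<exists>i\<le>n. \<forall>k\<in>{1..n}. real_of_int (d k) = DD i k"
  unfolding mmdirs_def
proof (elim UnE)
  assume "n \<ge> 1" "d \<in> {\<lambda>k. - unitv 1 k}"
  then show ?thesis by (intro exI[of _ 0]) (auto simp: DD_def ind_def unitv_def)
next
  assume "n \<ge> 1" "d \<in> {unitv n}"
  then show ?thesis by (intro exI[of _ n]) (auto simp: DD_def ind_def unitv_def)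
next
  assume "n \<ge> 1" "d \<in> {\<lambda>k. unitv i k - unitv (i + 1) k |i. 1 \<le> i \<and> i < n}"
  then obtain i where "d = (\<lambda>k. unitv i k - unitv (i + 1) k)" "i < n" by auto
  then show ?thesis by (intro exI[of _ i]) (auto simp: DD_def ind_def unitv_def)
qed

lemma dir_exists: "n \<ge> 1 \<Longrightarrow> i \<le> n \<Longrightarrow> \<exists>d\<in>mmdirs n. \<forall>k\<in>{1..n}. real_of_int (d k) = DD i k"
proof -
  assume n: "n \<ge> 1" "i \<le> n"
  consider "i = 0" | "i = n" | "1 \<le> i" "i < n" using n by linarith
  then show ?thesis
  proof cases
    case 1
    then show ?thesis by (intro bexI[of _ "\<lambda>k. - unitv 1 k"]) (auto simp: DD_def ind_def unitv_def mmdirs_def)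
  next
    case 2
    then show ?thesis by (intro bexI[of _ "unitv n"]) (auto simp: DD_def ind_def unitv_def mmdirs_def)
  next
    case 3
    then show ?thesis by (intro bexI[of _ "\<lambda>k. unitv i k - unitv (i + 1) k"]) (auto simp: DD_def ind_def unitv_def mmdirs_def)
  qed
qed

lemma dir_distinct:
  assumes "i < j" "j \<le> n" "\<forall>k\<in>{1..n}. real_of_int (d k) = DD i k" "\<forall>k\<in>{1..n}. real_of_int (d' k) = DD j k"
  shows "d \<noteq> d'"
proof
  assume "d = d'"
  have "i + 1 \<in> {1..n}" using assms by auto
  then have "DD i (i+1) = DD j (i+1)" using assms \<open>d = d'\<close> by metis
  then show False using assms(1) by (auto simp: DD_def ind_def split: if_splits)
qed

theorem proposition2p2:
  fixes n :: nat and A :: "nat \<Rightarrow> nat \<Rightarrow> real"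
  assumes "n \<ge> 1"
    and "\<forall>i \<in> {1..n}. \<forall>j \<in> {1..n}. A i j = A j i"
  shows "multimodular n (\<lambda>x. ereal (quadform n A x)) \<longleftrightarrow>
    (\<forall>i j. i < j \<and> j \<le> n \<longrightarrow>
       aext n A i j - aext n A i (j + 1) - aext n A (i + 1) j + aext n A (i + 1) (j + 1) \<le> 0)"
proof -
  let ?r = "\<lambda>d::nat\<Rightarrow>int. (\<lambda>k. real_of_int (d k))"
  have key: "(quadform n A (\<lambda>k. z k + d k) + quadform n A (\<lambda>k. z k + d' k)
      \<ge> quadform n A z + quadform n A (\<lambda>k. z k + d k + d' k))
      \<longleftrightarrow> BB n A (?r d) (?r d') \<le> 0" for z d d'
    using second_diff[of n A z d d'] BB_sym[OF assms(2), of "?r d" "?r d'"] by linarith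
  have z0: "(\<lambda>k. 0) \<in> mmdom n (\<lambda>x. ereal (quadform n A x))"
    by (simp add: mmdom_def zvec_def)
  show ?thesis
  proof
    assume mm: "multimodular n (\<lambda>x. ereal (quadform n A x))"
    show "\<forall>i j. i < j \<and> j \<le> n \<longrightarrow>
       aext n A i j - aext n A i (j + 1) - aext n A (i + 1) j + aext n A (i + 1) (j + 1) \<le> 0"
    proof (intro allI impI)
      fix i j assume ij: "i < j \<and> j \<le> n"
      obtain d where d: "d \<in> mmdirs n" "\<forall>k\<in>{1..n}. real_of_int (d k) = DD i k"
        using dir_exists[OF assms(1), of i] ij by auto
      obtain d' where d': "d' \<in> mmdirs n" "\<forall>k\<in>{1..n}. real_of_int (d' k) = DD j k"
        using dir_exists[OF assms(1), of j] ij by auto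
      have ne: "d \<noteq> d'" using dir_distinct[of i j n d d'] ij d d' by auto
      have "ereal (quadform n A (\<lambda>k. 0 + d k)) + ereal (quadform n A (\<lambda>k. 0 + d' k))
          \<ge> ereal (quadform n A (\<lambda>k. 0)) + ereal (quadform n A (\<lambda>k. 0 + d k + d' k))"
        using mm z0 d(1) d'(1) ne unfolding multimodular_def by blast
      then have "BB n A (?r d) (?r d') \<le> 0" using key[of "\<lambda>k. 0" d d'] by simp
      moreover have "BB n A (?r d) (?r d') = BB n A (DD i) (DD j)"
        using d d' by (intro BB_cong) auto
      ultimately show "aext n A i j - aext n A i (j + 1) - aext n A (i + 1) j + aext n A (i + 1) (j + 1) \<le> 0"
        by (simp add: BB_DD)
    qed
  next
    assume cond: "\<forall>i j. i < j \<and> j \<le> n \<longrightarrow>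
       aext n A i j - aext n A i (j + 1) - aext n A (i + 1) j + aext n A (i + 1) (j + 1) \<le> 0"
    have "BB n A (?r d) (?r d') \<le> 0" if dd: "d \<in> mmdirs n" "d' \<in> mmdirs n" "d \<noteq> d'" for d d'
    proof -
      obtain i where i: "i \<le> n" "\<forall>k\<in>{1..n}. real_of_int (d k) = DD i k"
        using dir_repr[OF assms(1) dd(1)] by auto
      obtain j where j: "j \<le> n" "\<forall>k\<in>{1..n}. real_of_int (d' k) = DD j k"
        using dir_repr[OF assms(1) dd(2)] by auto
      have eq: "BB n A (?r d) (?r d') = BB n A (DD i) (DD j)"
        using i j by (intro BB_cong) auto
      have "i \<noteq> j"
      proof
        assume "i = j"
        have "d = d'"
        proof
          fix k show "d k = d' k"
          proof (cases "k \<in> {1..n}")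
            case True then show ?thesis using i j \<open>i = j\<close> by (metis of_int_eq_iff)
          next
            case False then show ?thesis using dirs_zvec[OF assms(1)] dd by metis
          qed
        qed
        then show False using dd by simp
      qed
      then consider "i < j" | "j < i" by linarith
      then show ?thesis
      proof cases
        case 1 then show ?thesis using eq cond j by (simp add: BB_DD)
      next
        case 2 then show ?thesis using eq cond i BB_sym[OF assms(2), of "DD i" "DD j"] by (simp add: BB_DD)
      qed
    qed
    then show "multimodular n (\<lambda>x. ereal (quadform n A x))"
      unfolding multimodular_def using z0 key by auto
  qed
qed

end
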